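(* Let $(Q,\cdot,e)$ be a double Ward quasigroup and let $x\,\bar{\cdot}\,y=y\cdot x$ be the dual operation. Then $(Q,\bar{\cdot},e)$ is a double Ward quasigroup.
   Context: A quasigroup is a magma in which $ax=b$ and $ya=b$ have unique solutions for all $a,b$. A double Ward quasigroup $(Q,\cdot,e)$ is a quasigroup with an element $e$ such that $(ee\cdot xz)(ey\cdot z)=xy$ for all $x,y,z\in Q$. *)

theory Defs
  imports Main
begin

definition quasigroup :: "'a set \<Rightarrow> ('a \<Rightarrow> 'a \<Rightarrow> 'a) \<Rightarrow> bool" where
  "quasigroup Q f \<longleftrightarrow>
     (\<forall>x\<in>Q. \<forall>y\<in>Q. f x y \<in> Q) \<and>
     (\<forall>a\<in>Q. \<forall>b\<in>Q. \<exists>!x. x \<in> Q \<and> f a x = b) \<and>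
     (\<forall>a\<in>Q. \<forall>b\<in>Q. \<exists>!y. y \<in> Q \<and> f y a = b)"

definition double_ward_quasigroup :: "'a set \<Rightarrow> ('a \<Rightarrow> 'a \<Rightarrow> 'a) \<Rightarrow> 'a \<Rightarrow> bool" where
  "double_ward_quasigroup Q f e \<longleftrightarrow>
     quasigroup Q f \<and> e \<in> Q \<and>
     (\<forall>x\<in>Q. \<forall>y\<in>Q. \<forall>z\<in>Q. f (f (f e e) (f x z)) (f (f e y) z) = f x y)"

end

theory Submission
  imports Defs
begin

locale dw =
  fixes Q :: "'a set" and f :: "'a \<Rightarrow> 'a \<Rightarrow> 'a" and e :: 'a
  assumes cl: "x \<in> Q \<Longrightarrow> y \<in> Q \<Longrightarrow> f x y \<in> Q"
  and eQ: "e \<in> Q"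
  and lc: "a \<in> Q \<Longrightarrow> x \<in> Q \<Longrightarrow> y \<in> Q \<Longrightarrow> f a x = f a y \<Longrightarrow> x = y"
  and rc: "a \<in> Q \<Longrightarrow> x \<in> Q \<Longrightarrow> y \<in> Q \<Longrightarrow> f x a = f y a \<Longrightarrow> x = y"
  and ld: "a \<in> Q \<Longrightarrow> b \<in> Q \<Longrightarrow> \<exists>x\<in>Q. f a x = b"
  and rd: "a \<in> Q \<Longrightarrow> b \<in> Q \<Longrightarrow> \<exists>x\<in>Q. f x a = b"
  and W: "x \<in> Q \<Longrightarrow> y \<in> Q \<Longrightarrow> z \<in> Q \<Longrightarrow> f (f (f e e) (f x z)) (f (f e y) z) = f x y"
begin
lemma L15: "a \<in> Q \<Longrightarrow> x \<in> Q \<Longrightarrow> y \<in> Q \<Longrightarrow> \<exists>u\<in>Q. f a u = y \<and> f a x = f (f (f e e) y) (f (f e x) u)"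
  by (metis W ld)
lemma L26: "x \<in> Q \<Longrightarrow> y \<in> Q \<Longrightarrow> f (f e x) x = f (f (f e e) y) y"
  by (metis cl eQ L15)
lemma L33: "x \<in> Q \<Longrightarrow> y \<in> Q \<Longrightarrow> f (f e x) x = f (f e y) y"
  by (metis L26)
lemma L70: "x \<in> Q \<Longrightarrow> y \<in> Q \<Longrightarrow> f (f (f e e) x) y = f (f e x) y"
  by (metis L26 eQ cl rc)
lemma L78: "x \<in> Q \<Longrightarrow> f (f e e) x = f e x"
  by (metis L70 L26 eQ cl rc)
lemma L126: "x \<in> Q \<Longrightarrow> f e e = f (f e x) x"
  by (metis eQ L78 L33)
lemma L143: "x \<in> Q \<Longrightarrow> f (f e x) (f e e) = x"
proof -
  assume x: "x \<in> Q"
  obtain u where u: "u \<in> Q" "f e u = x" using ld[OF eQ x] by blast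
  show ?thesis
    by (smt (verit, ccfv_threshold) L78 dw_axioms dw_def x)
qed
lemma L147: "f e e = e"
  by (metis eQ L15 L33)
lemma L156: "x \<in> Q \<Longrightarrow> f (f e x) e = x"
  by (metis L147 L143)
lemma L214: "x \<in> Q \<Longrightarrow> f e (f x e) = x"
  by (metis eQ L156 L15)
lemma L209: "x \<in> Q \<Longrightarrow> f x (f x e) = e"
  by (metis eQ L26 W L156 cl)
lemma L312: "x \<in> Q \<Longrightarrow> f e x = f x e"
  by (metis (full_types) L214 W cl eQ L126 ld L209 L147)
lemma L326: "x \<in> Q \<Longrightarrow> f e (f e x) = x"
  by (metis L214 L312)
lemma L89: "x \<in> Q \<Longrightarrow> y \<in> Q \<Longrightarrow> z \<in> Q \<Longrightarrow> f x y = f (f e (f x z)) (f (f e y) z)"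
  by (metis L147 W)
lemma L131: "x \<in> Q \<Longrightarrow> y \<in> Q \<Longrightarrow> f x e = f (f e (f x y)) (f e y)"
  by (metis L147 L89 eQ)
lemma L355: "x \<in> Q \<Longrightarrow> y \<in> Q \<Longrightarrow> f e y = f x (f (f e y) x)"
  by (metis L326 L89 eQ L147 L214 L312 W)
lemma L725: "x \<in> Q \<Longrightarrow> y \<in> Q \<Longrightarrow> f x (f y x) = y"
  by (metis L214 L355 cl eQ)
lemma L784: "x \<in> Q \<Longrightarrow> y \<in> Q \<Longrightarrow> f (f x y) x = y"
  by (metis L725 cl)
lemma L826: "x \<in> Q \<Longrightarrow> y \<in> Q \<Longrightarrow> z \<in> Q \<Longrightarrow> f x (f (f e z) y) = f (f y (f x e)) z"
proof -
  assume q: "x \<in> Q" "y \<in> Q" "z \<in> Q"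
  have "f (f e (f (f y (f x e)) y)) (f (f e z) y) = f (f y (f x e)) z"
    using L89[of "f y (f x e)" z y] q by (simp add: cl eQ)
  moreover have "f (f y (f x e)) y = f x e" using L784 q cl eQ by blast
  ultimately show ?thesis using L214 q by simp
qed
lemma Fin: "x \<in> Q \<Longrightarrow> y \<in> Q \<Longrightarrow> z \<in> Q \<Longrightarrow> f (f z (f y e)) (f (f z x) (f e e)) = f y x"
proof -
  assume q: "x \<in> Q" "y \<in> Q" "z \<in> Q"
  have "f (f z (f y e)) (f (f z x) e) = f y (f (f e (f (f z x) e)) z)"
    using L826[of y z "f (f z x) e"] q by (simp add: cl eQ)
  also have "\<dots> = f y (f (f z x) z)" using L214 q cl by simp
  also have "\<dots> = f y x" using L784 q by simp
  finally show ?thesis using L147 by simp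
qed
end

theorem theorem4p9:
  assumes "double_ward_quasigroup Q f e"
  shows "double_ward_quasigroup Q (\<lambda>x y. f y x) e"
proof -
  have q: "quasigroup Q f" and eQ: "e \<in> Q"
    and W: "\<forall>x\<in>Q. \<forall>y\<in>Q. \<forall>z\<in>Q. f (f (f e e) (f x z)) (f (f e y) z) = f x y"
    using assms unfolding double_ward_quasigroup_def by auto
  have cl: "\<forall>x\<in>Q. \<forall>y\<in>Q. f x y \<in> Q"
    and L: "\<forall>a\<in>Q. \<forall>b\<in>Q. \<exists>!x. x \<in> Q \<and> f a x = b"
    and R: "\<forall>a\<in>Q. \<forall>b\<in>Q. \<exists>!y. y \<in> Q \<and> f y a = b"
    using q unfolding quasigroup_def by auto
  interpret dw Q f e
  proof
    show "\<And>a x y. a \<in> Q \<Longrightarrow> x \<in> Q \<Longrightarrow> y \<in> Q \<Longrightarrow> f a x = f a y \<Longrightarrow> x = y"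
      using L cl by metis
    show "\<And>a x y. a \<in> Q \<Longrightarrow> x \<in> Q \<Longrightarrow> y \<in> Q \<Longrightarrow> f x a = f y a \<Longrightarrow> x = y"
      using R cl by metis
  qed (use cl eQ W L R in blast)+
  have "quasigroup Q (\<lambda>x y. f y x)"
    unfolding quasigroup_def using cl L R by auto
  moreover have "\<forall>x\<in>Q. \<forall>y\<in>Q. \<forall>z\<in>Q. f (f z (f y e)) (f (f z x) (f e e)) = f y x"
    using Fin by blast
  ultimately show ?thesis unfolding double_ward_quasigroup_def using eQ by auto
qed

end
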